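(* Let $q$ be a prime power and $k\ge3$, $h\ge2$ integers, and $1\le u_0<u_1\le\dots\le u_h$ integers. Let $U_0,U_1,\dots,U_h$ be subspaces of $\mathbf F_q^k$ of dimensions $u_0,u_1,\dots,u_h$ with $U_i\cap U_j=U_0$ for all distinct $i,j\in\{1,\dots,h\}$, and assume $q^k-q^{k-1}>q^{u_0}-1+\sum_{i=1}^h(q^{u_i}-q^{u_0})$. Let $U$ be the set of nonzero vectors of $\mathbf F_q^k$ not in $U_1\cup\dots\cup U_h$, let $\widetilde G$ be a matrix whose columns consist of exactly one representative of each class $\{\lambda\mathbf v:\lambda\in\mathbf F_q^*\}$, $\mathbf v\in U$, and let $\mathbf C$ be the linear code with generator matrix $\widetilde G$. If $h\le q^{u_1-u_0}$, then $\mathbf C$ is a linear $\big[\frac{(q^k-q^{u_0})-\sum_{i=1}^h(q^{u_i}-q^{u_0})}{q-1},\,k,\,q^{k-1}-\sum_{i=1}^hq^{u_i-1}\big]_q$ code (its minimum distance equals $q^{k-1}-\sum_{i=1}^hq^{u_i-1}$). *)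

theory Defs
  imports "HOL-Analysis.Analysis"
begin

text \<open>A matrix over a field 'a with k rows is given by the list of its columns
  (vectors in 'a^'n, CARD('n) = k).\<close>

definition gen_code :: "('a::field ^ 'n) list \<Rightarrow> 'a list set" where
  "gen_code cols = {map (\<lambda>c. scalar_product x c) cols | x. True}"

definition hweight :: "'a::zero list \<Rightarrow> nat" where
  "hweight c = length (filter (\<lambda>a. a \<noteq> 0) c)"

definition min_dist :: "'a::zero list set \<Rightarrow> nat" where
  "min_dist C = Min {hweight c | c. c \<in> C \<and> (\<exists>a\<in>set c. a \<noteq> 0)}"

end

theory Submission
  imports Defs
begin

lemma sp_add: "scalar_product x (v + w) = scalar_product x v + scalar_product (x::'a::field^'n) w"
  unfolding scalar_product_def by (simp add: distrib_left sum.distrib)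

lemma sp_diff: "scalar_product x (v - w) = scalar_product x v - scalar_product (x::'a::field^'n) w"
  unfolding scalar_product_def by (simp add: algebra_simps sum_subtractf)

lemma sp_scale: "scalar_product x (t *s v) = t * scalar_product (x::'a::field^'n) v"
  unfolding scalar_product_def by (simp add: sum_distrib_left algebra_simps)

lemma sp_comm: "scalar_product x v = scalar_product v (x::'a::field^'n)"
  unfolding scalar_product_def by (simp add: mult.commute)

lemma sp_axis: "scalar_product x (axis i 1) = (x::'a::field^'n) $ i"
  unfolding scalar_product_def axis_def
  by (simp add: if_distrib cong: if_cong)

lemma sp_zero[simp]: "scalar_product x 0 = (0::'a::field)"
  unfolding scalar_product_def by simp

lemma card_subspace:
  fixes U :: "('a::{finite,field}^'n) set"
  assumes "vec.subspace U"
  shows "card U = CARD('a) ^ vec.dim U"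
proof -
  obtain B where B: "B \<subseteq> U" "vec.independent B" "U \<subseteq> vec.span B" "card B = vec.dim U"
    using vec.basis_exists by blast
  have fB: "finite B" by simp
  have spanB: "vec.span B = U"
    using B assms vec.span_minimal by blast
  let ?g = "\<lambda>f. \<Sum>v\<in>B. f v *s v"
  have rg: "range ?g = U" using spanB vec.span_finite[OF fB] by simp
  have img: "?g ` (B \<rightarrow>\<^sub>E (UNIV::'a set)) = U"
  proof
    show "?g ` (B \<rightarrow>\<^sub>E (UNIV::'a set)) \<subseteq> U"
      unfolding rg[symmetric] by (rule image_subsetI) simp
    show "U \<subseteq> ?g ` (B \<rightarrow>\<^sub>E (UNIV::'a set))"
    proof
      fix y assume "y \<in> U"
      then have "y \<in> range ?g" using rg by simp
      then obtain f where y: "y = ?g f" by blast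
      have e: "?g (restrict f B) = ?g f" by (rule sum.cong) auto
      have r: "restrict f B \<in> B \<rightarrow>\<^sub>E (UNIV::'a set)" by simp
      show "y \<in> ?g ` (B \<rightarrow>\<^sub>E UNIV)" unfolding y e[symmetric] using r by (rule imageI)
    qed
  qed
  have inj: "inj_on ?g (B \<rightarrow>\<^sub>E (UNIV::'a set))"
  proof
    fix f g assume f: "f \<in> B \<rightarrow>\<^sub>E (UNIV::'a set)" and g: "g \<in> B \<rightarrow>\<^sub>E (UNIV::'a set)"
      and eq: "?g f = ?g g"
    have "(\<Sum>v\<in>B. (f v - g v) *s v) = ?g f - ?g g"
      by (simp add: vec.scale_left_diff_distrib sum_subtractf)
    then have "(\<Sum>v\<in>B. (f v - g v) *s v) = 0" using eq by simp
    then have "\<forall>v\<in>B. f v - g v = 0"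
    proof -
      have "\<forall>c. (\<Sum>v\<in>B. c v *s v) = 0 \<longrightarrow> (\<forall>v\<in>B. c v = 0)"
        using B(2) unfolding vec.independent_explicit by blast
      from spec[OF this, of "\<lambda>v. f v - g v"] show ?thesis using \<open>(\<Sum>v\<in>B. (f v - g v) *s v) = 0\<close> by blast
    qed
    then have "\<forall>v\<in>B. f v = g v" by simp
    then show "f = g" using f g PiE_ext by metis
  qed
  have "card U = card (B \<rightarrow>\<^sub>E (UNIV::'a set))"
    using card_image[OF inj] img by simp
  also have "\<dots> = CARD('a) ^ card B" by (simp add: card_PiE)
  finally show ?thesis using B(4) by simp
qed

lemma card_fiber:
  fixes U :: "('a::{finite,field}^'n) set"
  assumes sub: "vec.subspace U" and u: "u \<in> U" and xu: "scalar_product x u \<noteq> 0"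
  shows "card U = CARD('a) * card {v\<in>U. scalar_product x v = 0}"
proof -
  let ?F = "\<lambda>a. {v\<in>U. scalar_product x v = a}"
  have U: "U = (\<Union>a\<in>UNIV. ?F a)" by auto
  have "card U = (\<Sum>a\<in>UNIV. card (?F a))"
    by (subst U, rule card_UN_disjoint) auto
  also have "\<dots> = (\<Sum>a\<in>(UNIV::'a set). card (?F 0))"
  proof (rule sum.cong[OF refl])
    fix a :: 'a
    let ?m = "\<lambda>v. v + (a / scalar_product x u) *s u"
    have "bij_betw ?m (?F 0) (?F a)"
    proof (rule bij_betw_byWitness[where f' = "\<lambda>v. v - (a / scalar_product x u) *s u"])
      show "?m ` ?F 0 \<subseteq> ?F a"
        using xu u sub by (auto simp: sp_add sp_scale vec.subspace_add vec.subspace_scale)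
      show "(\<lambda>v. v - (a / scalar_product x u) *s u) ` ?F a \<subseteq> ?F 0"
      proof
        fix w assume "w \<in> (\<lambda>v. v - (a / scalar_product x u) *s u) ` ?F a"
        then obtain v where v: "v \<in> U" "scalar_product x v = a" and w: "w = v - (a / scalar_product x u) *s u"
          by blast
        have "w \<in> U" unfolding w using v u sub vec.subspace_diff vec.subspace_scale by blast
        moreover have "scalar_product x w = 0" unfolding w sp_diff sp_scale using v xu by simp
        ultimately show "w \<in> ?F 0" by simp
      qed
    qed (auto simp: algebra_simps)
    then show "card (?F a) = card (?F 0)" by (simp add: bij_betw_same_card)
  qed
  finally show ?thesis by simp
qed

lemma card_ge2: "CARD('a::{finite,field}) \<ge> 2"
proof -
  have "card {0::'a, 1} \<le> CARD('a)" by (rule card_mono) auto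
  then show ?thesis by simp
qed

lemma card_hyper:
  fixes z :: "'a::{finite,field}^'n"
  assumes "z \<noteq> 0"
  shows "CARD('a) * card {v. scalar_product z v = 0} = CARD('a) ^ CARD('n)"
proof -
  obtain i where i: "z $ i \<noteq> 0" using assms by (metis vec_eq_iff zero_index)
  have "card (UNIV :: ('a^'n) set) = CARD('a) * card {v\<in>UNIV. scalar_product z v = 0}"
    by (rule card_fiber[of UNIV "axis i 1"]) (auto simp: sp_axis i)
  then show ?thesis by simp
qed

lemma card_ann:
  fixes U :: "('a::{finite,field}^'n) set"
  assumes sub: "vec.subspace U"
  shows "card {x. \<forall>u\<in>U. scalar_product x u = 0} * card U = CARD('a) ^ CARD('n)"
proof -
  define q where "q = CARD('a)"
  define Q where "Q = CARD('a) ^ CARD('n)"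
  define A where "A = {x::'a^'n. \<forall>u\<in>U. scalar_product x u = 0}"
  have q2: "q \<ge> 2" unfolding q_def by (rule card_ge2)
  have fU: "finite U" by simp
  have U0: "0 \<in> U" using sub vec.subspace_0 by blast
  have cU: "card U \<ge> 1" using U0 fU by (metis One_nat_def Suc_leI card_gt_0_iff empty_iff)
  have dc: "(\<Sum>u\<in>U. card {x\<in>UNIV. scalar_product x u = 0}) = (\<Sum>x\<in>UNIV. card {u\<in>U. scalar_product x u = 0})"
    by (rule sum_multicount_gen) auto
  define L' where "L' = (\<Sum>u\<in>U-{0}. card {x\<in>UNIV. scalar_product x u = 0})"
  have L: "(\<Sum>u\<in>U. card {x\<in>UNIV. scalar_product x u = 0}) = Q + L'"
    unfolding L'_def Q_def by (simp add: sum.remove[OF fU U0])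
  have L'q: "q * L' = (card U - 1) * Q"
  proof -
    have "q * L' = (\<Sum>u\<in>U-{0}. q * card {x. scalar_product u x = 0})"
      unfolding L'_def by (simp add: sum_distrib_left sp_comm)
    also have "\<dots> = (\<Sum>u\<in>U-{0}. Q)"
      using card_hyper unfolding q_def Q_def by (intro sum.cong) auto
    also have "\<dots> = (card U - 1) * Q" using U0 fU by simp
    finally show ?thesis .
  qed
  define R' where "R' = (\<Sum>x\<in>UNIV-A. card {u\<in>U. scalar_product x u = 0})"
  have R: "(\<Sum>x\<in>UNIV. card {u\<in>U. scalar_product x u = 0}) = card A * card U + R'"
  proof -
    have "(\<Sum>x\<in>UNIV. card {u\<in>U. scalar_product x u = 0}) =
          (\<Sum>x\<in>A. card {u\<in>U. scalar_product x u = 0}) + R'"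
      unfolding R'_def by (metis (no_types, lifting) Diff_subset finite sum.subset_diff add.commute top_greatest)
    also have "(\<Sum>x\<in>A. card {u\<in>U. scalar_product x u = 0}) = (\<Sum>x\<in>A. card U)"
      by (rule sum.cong) (auto simp: A_def intro!: arg_cong[where f=card])
    finally show ?thesis by simp
  qed
  have R'q: "q * R' = (Q - card A) * card U"
  proof -
    have "q * R' = (\<Sum>x\<in>UNIV-A. q * card {u\<in>U. scalar_product x u = 0})"
      unfolding R'_def by (simp add: sum_distrib_left)
    also have "\<dots> = (\<Sum>x\<in>UNIV-A. card U)"
    proof (rule sum.cong[OF refl])
      fix x assume "x \<in> UNIV - A"
      then obtain u where "u \<in> U" "scalar_product x u \<noteq> 0" unfolding A_def by blast
      then show "q * card {u\<in>U. scalar_product x u = 0} = card U"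
        unfolding q_def using card_fiber[OF sub] by metis
    qed
    also have "\<dots> = (Q - card A) * card U"
      by (simp add: card_Diff_subset Q_def)
    finally show ?thesis .
  qed
  have aQ: "card A \<le> Q" unfolding Q_def by (metis CARD_vec card_mono finite subset_UNIV)
  have e: "Q + L' = card A * card U + R'" using dc L R by simp
  have "int q * (int Q + int L') = int q * (int (card A) * int (card U) + int R')"
    using e by (metis of_nat_add of_nat_mult)
  then have "int q * int Q + int q * int L' = int q * (int (card A) * int (card U)) + int q * int R'"
    by (simp add: algebra_simps)
  moreover have "int q * int L' = (int (card U) - 1) * int Q"
    using L'q cU by (metis of_nat_diff of_nat_mult of_nat_1)
  moreover have "int q * int R' = (int Q - int (card A)) * int (card U)"
    using R'q aQ by (metis of_nat_diff of_nat_mult)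
  ultimately have "(int q - 1) * int Q = (int q - 1) * (int (card A) * int (card U))"
    by (simp add: algebra_simps)
  then have "int Q = int (card A) * int (card U)" using q2 by simp
  then have "Q = card A * card U" by (metis of_nat_eq_iff of_nat_mult)
  then show ?thesis unfolding A_def Q_def by simp
qed

lemma card_diff_hyper:
  fixes U :: "('a::{finite,field}^'n) set"
  assumes sub: "vec.subspace U" and nsub: "\<not> U \<subseteq> {v. scalar_product z v = 0}"
  shows "card (U - {v. scalar_product z v = 0}) = CARD('a) ^ vec.dim U - CARD('a) ^ (vec.dim U - 1)"
    and "vec.dim U \<ge> 1"
proof -
  define q where "q = CARD('a)"
  have q2: "q \<ge> 2" unfolding q_def by (rule card_ge2)
  obtain u where u: "u \<in> U" "scalar_product z u \<noteq> 0" using nsub by blast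
  have f: "card U = q * card {v\<in>U. scalar_product z v = 0}"
    unfolding q_def by (rule card_fiber[OF sub u])
  have cs: "card U = q ^ vec.dim U" unfolding q_def by (rule card_subspace[OF sub])
  show d1: "vec.dim U \<ge> 1"
  proof (rule ccontr)
    assume "\<not> 1 \<le> vec.dim U"
    then have "vec.dim U = 0" by linarith
    then have "card U = 1" using cs by (metis power_0)
    then have "q * card {v\<in>U. scalar_product z v = 0} = 1" using f by simp
    then have "q = 1" by (simp add: nat_mult_eq_1_iff)
    then show False using q2 by simp
  qed
  obtain m where m: "vec.dim U = Suc m" using d1 by (cases "vec.dim U") auto
  have "q * card {v\<in>U. scalar_product z v = 0} = q * q ^ (vec.dim U - 1)"
    using f cs m by (metis diff_Suc_1 power_Suc)
  then have c0: "card {v\<in>U. scalar_product z v = 0} = q ^ (vec.dim U - 1)"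
    using q2 by simp
  have "U - {v. scalar_product z v = 0} = U - {v\<in>U. scalar_product z v = 0}" by blast
  then have "card (U - {v. scalar_product z v = 0}) = card U - card {v\<in>U. scalar_product z v = 0}"
    by (simp add: card_Diff_subset)
  then show "card (U - {v. scalar_product z v = 0}) = CARD('a) ^ vec.dim U - CARD('a) ^ (vec.dim U - 1)"
    using c0 cs unfolding q_def by simp
qed

lemma count_cols:
  fixes S :: "('a::{finite,field}^'n) set" and cols :: "('a^'n) list"
  assumes S_scale: "\<forall>v\<in>S. \<forall>t. t \<noteq> 0 \<longrightarrow> t *s v \<in> S"
    and S0: "0 \<notin> S"
    and sub: "set cols \<subseteq> S"
    and rep: "\<forall>v\<in>S. card {c \<in> set cols. \<exists>t. t \<noteq> 0 \<and> c = t *s v} = 1"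
    and P: "\<forall>v t. t \<noteq> 0 \<longrightarrow> P (t *s v) = P v"
  shows "card {v\<in>S. P v} = (CARD('a) - 1) * card {c\<in>set cols. P c}"
proof -
  let ?R = "\<lambda>c v. \<exists>t. t \<noteq> 0 \<and> c = t *s v"
  let ?C = "{c\<in>set cols. P c}" and ?S = "{v\<in>S. P v}"
  have "(\<Sum>c\<in>?C. card {v\<in>?S. ?R c v}) = 1 * card ?S"
  proof (rule sum_multicount)
    show "\<forall>v\<in>?S. card {c\<in>?C. ?R c v} = 1"
    proof
      fix v assume v: "v \<in> ?S"
      have "{c\<in>?C. ?R c v} = {c \<in> set cols. ?R c v}" using v P by auto
      then show "card {c\<in>?C. ?R c v} = 1" using rep v by simp
    qed
  qed auto
  also have "(\<Sum>c\<in>?C. card {v\<in>?S. ?R c v}) = (\<Sum>c\<in>?C. CARD('a) - 1)"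
  proof (rule sum.cong[OF refl])
    fix c assume c: "c \<in> ?C"
    then have cS: "c \<in> S" and Pc: "P c" using sub by auto
    have c0: "c \<noteq> 0" using cS S0 by auto
    have eq: "{v\<in>?S. ?R c v} = (\<lambda>s. s *s c) ` (UNIV - {0})"
    proof
      show "{v\<in>?S. ?R c v} \<subseteq> (\<lambda>s. s *s c) ` (UNIV - {0})"
      proof
        fix v assume "v \<in> {v\<in>?S. ?R c v}"
        then obtain t where t: "t \<noteq> 0" "c = t *s v" by blast
        then have vi: "v = inverse t *s c" by (simp add: vec.scale_scale)
        have "inverse t \<in> UNIV - {0}" using t by simp
        then show "v \<in> (\<lambda>s. s *s c) ` (UNIV - {0})" using vi by (rule rev_image_eqI)
      qed
      show "(\<lambda>s. s *s c) ` (UNIV - {0}) \<subseteq> {v\<in>?S. ?R c v}"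
      proof
        fix v assume "v \<in> (\<lambda>s. s *s c) ` (UNIV - {0})"
        then obtain s where s: "s \<noteq> 0" "v = s *s c" by blast
        have "v \<in> S" using S_scale cS s by blast
        moreover have "P v" using P s Pc by simp
        moreover have cv: "c = inverse s *s v" using s by (simp add: vec.scale_scale)
        moreover have "?R c v" using s(1) cv by (intro exI[of _ "inverse s"]) simp
        ultimately show "v \<in> {v\<in>?S. ?R c v}" by blast
      qed
    qed
    have "inj_on (\<lambda>s. s *s c) (UNIV - {0})"
      using c0 by (auto simp: inj_on_def)
    then show "card {v\<in>?S. ?R c v} = CARD('a) - 1"
      unfolding eq by (simp add: card_image card_Diff_singleton)
  qed
  finally have "card ?C * (CARD('a) - 1) = card ?S" by simp
  then show ?thesis by (metis mult.commute)
qed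

lemma sp_diff_left: "scalar_product (x - y) c = scalar_product x c - scalar_product (y::'a::field^'n) c"
  unfolding scalar_product_def by (simp add: algebra_simps sum_subtractf)

lemma pow_diff_int: "n \<ge> 1 \<Longrightarrow> (q::int) ^ n - q ^ (n - 1) = (q - 1) * q ^ (n - 1)"
  by (cases n) (auto simp: algebra_simps)

lemma hweight_map:
  assumes "distinct cols"
  shows "hweight (map f cols) = card {c\<in>set cols. f c \<noteq> 0}"
proof -
  have "hweight (map f cols) = length (filter (\<lambda>c. f c \<noteq> 0) cols)"
    unfolding hweight_def by (simp add: filter_map o_def)
  also have "\<dots> = card (set (filter (\<lambda>c. f c \<noteq> 0) cols))"
    using distinct_card[OF distinct_filter[OF assms, of "\<lambda>c. f c \<noteq> 0"]] by simp
  finally show ?thesis by simp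
qed

lemma decomp:
  fixes Us :: "nat \<Rightarrow> 'b set"
  assumes fin: "\<And>i. finite (Us i)"
    and U0i: "\<And>i. 1 \<le> i \<Longrightarrow> i \<le> h \<Longrightarrow> Us 0 \<subseteq> Us i"
    and disj: "\<And>i j. i \<in> {1..h} \<Longrightarrow> j \<in> {1..h} \<Longrightarrow> i \<noteq> j \<Longrightarrow> Us i \<inter> Us j = Us 0"
    and h1: "h \<ge> 1"
  shows "int (card ((\<Union>i\<in>{1..h}. Us i) - X)) =
         int (card (Us 0 - X)) + (\<Sum>i=1..h. int (card (Us i - X)) - int (card (Us 0 - X)))"
proof -
  have eq: "(\<Union>i\<in>{1..h}. Us i) - X = (Us 0 - X) \<union> (\<Union>i\<in>{1..h}. (Us i - Us 0) - X)"
  proof -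
    have "Us 0 \<subseteq> Us 1" using U0i[of 1] h1 by simp
    then have "Us 0 \<subseteq> (\<Union>i\<in>{1..h}. Us i)" using h1 by force
    then show ?thesis by blast
  qed
  have d1: "(Us 0 - X) \<inter> (\<Union>i\<in>{1..h}. (Us i - Us 0) - X) = {}" by blast
  have c1: "card (\<Union>i\<in>{1..h}. (Us i - Us 0) - X) = (\<Sum>i=1..h. card ((Us i - Us 0) - X))"
  proof (rule card_UN_disjoint)
    show "\<forall>i\<in>{1..h}. \<forall>j\<in>{1..h}. i \<noteq> j \<longrightarrow> (Us i - Us 0 - X) \<inter> (Us j - Us 0 - X) = {}"
      using disj by blast
  qed (use fin in auto)
  have c2: "int (card ((Us i - Us 0) - X)) = int (card (Us i - X)) - int (card (Us 0 - X))"
    if "i \<in> {1..h}" for i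
  proof -
    have s: "Us 0 - X \<subseteq> Us i - X" using U0i that by auto
    have "(Us i - Us 0) - X = (Us i - X) - (Us 0 - X)" by blast
    then have "card ((Us i - Us 0) - X) = card (Us i - X) - card (Us 0 - X)"
      using s fin by (simp add: card_Diff_subset finite_subset)
    moreover have "card (Us 0 - X) \<le> card (Us i - X)" using s fin by (simp add: card_mono)
    ultimately show ?thesis by simp
  qed
  have "card ((\<Union>i\<in>{1..h}. Us i) - X) = card (Us 0 - X) + card (\<Union>i\<in>{1..h}. (Us i - Us 0) - X)"
    unfolding eq using fin d1 by (simp add: card_Un_disjoint)
  then have "int (card ((\<Union>i\<in>{1..h}. Us i) - X)) = int (card (Us 0 - X)) + (\<Sum>i=1..h. int (card ((Us i - Us 0) - X)))"
    using c1 by simp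
  also have "(\<Sum>i=1..h. int (card ((Us i - Us 0) - X))) = (\<Sum>i=1..h. int (card (Us i - X)) - int (card (Us 0 - X)))"
    using c2 by (rule sum.cong[OF refl])
  finally show ?thesis .
qed

theorem theorem3p2:
  fixes Us :: "nat \<Rightarrow> ('a::{finite,field} ^ 'n) set"
    and u :: "nat \<Rightarrow> nat" and h k :: nat
    and cols :: "('a ^ 'n) list"
  defines "q \<equiv> CARD('a)"
  assumes k_def: "CARD('n) = k" and k3: "k \<ge> 3" and h2: "h \<ge> 2"
    and u0: "1 \<le> u 0" and u01: "u 0 < u 1"
    and umono: "\<forall>i. 1 \<le> i \<and> i < h \<longrightarrow> u i \<le> u (Suc i)"
    and subsp: "\<forall>i \<le> h. vec.subspace (Us i) \<and> vec.dim (Us i) = u i"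
    and inter: "\<forall>i j. 1 \<le> i \<and> i \<le> h \<and> 1 \<le> j \<and> j \<le> h \<and> i \<noteq> j
                   \<longrightarrow> Us i \<inter> Us j = Us 0"
    and ineq: "int q ^ k - int q ^ (k - 1)
                 > int q ^ u 0 - 1 + (\<Sum>i=1..h. (int q ^ u i - int q ^ u 0))"
    and cols_dist: "distinct cols"
    and cols_sub: "set cols \<subseteq> {v. v \<noteq> 0 \<and> v \<notin> (\<Union>i\<in>{1..h}. Us i)}"
    and cols_rep: "\<forall>v. v \<noteq> 0 \<and> v \<notin> (\<Union>i\<in>{1..h}. Us i) \<longrightarrow>
                     card {c \<in> set cols. \<exists>t. t \<noteq> 0 \<and> c = t *s v} = 1"
    and hle: "h \<le> q ^ (u 1 - u 0)"
  shows "real (length cols) =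
           ((real q ^ k - real q ^ u 0) - (\<Sum>i=1..h. (real q ^ u i - real q ^ u 0))) / (real q - 1)
         \<and> card (gen_code cols) = q ^ k
         \<and> int (min_dist (gen_code cols)) = int q ^ (k - 1) - (\<Sum>i=1..h. int q ^ (u i - 1))"
proof -
  define UU where "UU = (\<Union>i\<in>{1..h}. Us i)"
  define S where "S = {v::'a^'n. v \<noteq> 0 \<and> v \<notin> UU}"
  define H where "H = (\<lambda>z::'a^'n. {v. scalar_product z v = 0})"
  define wt where "wt = (\<lambda>z::'a^'n. card {c\<in>set cols. scalar_product z c \<noteq> 0})"
  have q2: "q \<ge> 2" unfolding q_def by (rule card_ge2)
  have sub: "vec.subspace (Us i)" if "i \<le> h" for i using subsp that by blast
  have dim: "vec.dim (Us i) = u i" if "i \<le> h" for i using subsp that by blast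
  have cardU: "card (Us i) = q ^ u i" if "i \<le> h" for i
    using card_subspace[OF sub[OF that]] dim[OF that] unfolding q_def by simp
  have U0i: "Us 0 \<subseteq> Us i" if "1 \<le> i" "i \<le> h" for i
  proof -
    define j :: nat where "j = (if i = 1 then 2 else 1)"
    have "1 \<le> j" "j \<le> h" "i \<noteq> j" using that h2 unfolding j_def by auto
    then have "Us i \<inter> Us j = Us 0" using inter that by blast
    then show ?thesis by blast
  qed
  have disj: "Us i \<inter> Us j = Us 0" if "i \<in> {1..h}" "j \<in> {1..h}" "i \<noteq> j" for i j
    using inter that by auto
  have u_ge: "u 1 \<le> u i" if "1 \<le> i" "i \<le> h" for i
    using that
  proof (induction i)
    case 0 then show ?case by simp
  next
    case (Suc i)
    show ?case
    proof (cases "i = 0")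
      case True then show ?thesis by simp
    next
      case False
      then have "u 1 \<le> u i" using Suc by simp
      moreover have "u i \<le> u (Suc i)" using umono Suc False by simp
      ultimately show ?thesis by simp
    qed
  qed
  have u_le_k: "u i \<le> k" if "i \<le> h" for i
  proof -
    have "vec.dim (Us i) \<le> vec.dim (UNIV::('a^'n) set)" by (rule vec.dim_subset) simp
    then show ?thesis using dim[OF that] k_def by (simp add: card_cart_basis)
  qed
  have zero_U: "0 \<in> Us i" if "i \<le> h" for i using sub[OF that] vec.subspace_0 by blast
  have zero_Un: "0 \<in> UU" unfolding UU_def using zero_U[of 1] h2 by force
  have S_alt: "S = UNIV - UU" unfolding S_def using zero_Un by auto
  have S0: "0 \<notin> S" unfolding S_def by simp
  have S_scale: "\<forall>v\<in>S. \<forall>t. t \<noteq> 0 \<longrightarrow> t *s v \<in> S"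
  proof (intro ballI allI impI)
    fix v t assume v: "v \<in> S" and t: "(t::'a) \<noteq> 0"
    have "t *s v \<notin> Us i" if i: "i \<in> {1..h}" for i
    proof
      assume "t *s v \<in> Us i"
      moreover have "vec.subspace (Us i)" using sub i by simp
      ultimately have "inverse t *s (t *s v) \<in> Us i" using vec.subspace_scale by blast
      then have "v \<in> Us i" using t by (simp add: vec.scale_scale)
      then show False using v i unfolding S_def UU_def by blast
    qed
    moreover have "t *s v \<noteq> 0" using v t S0 by auto
    ultimately show "t *s v \<in> S" unfolding S_def UU_def by blast
  qed
  have rep: "\<forall>v\<in>S. card {c \<in> set cols. \<exists>t. t \<noteq> 0 \<and> c = t *s v} = 1"
    using cols_rep unfolding S_def UU_def by blast
  have colsS: "set cols \<subseteq> S" using cols_sub unfolding S_def UU_def by blast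
  note cnt = count_cols[OF S_scale S0 colsS rep]
  have decompX: "int (card (UU - X)) =
         int (card (Us 0 - X)) + (\<Sum>i=1..h. int (card (Us i - X)) - int (card (Us 0 - X)))" for X
    unfolding UU_def by (rule decomp) (use U0i disj h2 in auto)
  have cardUn: "int (card UU) = int q ^ u 0 + (\<Sum>i=1..h. int q ^ u i - int q ^ u 0)"
  proof -
    have "int (card UU) = int (card (Us 0)) + (\<Sum>i=1..h. int (card (Us i)) - int (card (Us 0)))"
      using decompX[of "{}"] by simp
    also have "\<dots> = int q ^ u 0 + (\<Sum>i=1..h. int q ^ u i - int q ^ u 0)"
      using cardU by (intro arg_cong2[where f="(+)"] sum.cong) auto
    finally show ?thesis .
  qed
  have cardS: "card S = (q - 1) * length cols"
  proof -
    have "card {v\<in>S. True} = (CARD('a) - 1) * card {c\<in>set cols. True}"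
      by (rule cnt) simp
    then show ?thesis using distinct_card[OF cols_dist] unfolding q_def by simp
  qed
  have cardS2: "int (card S) = int q ^ k - int (card UU)"
  proof -
    have "card S = card (UNIV::('a^'n) set) - card UU" unfolding S_alt
      by (simp add: card_Diff_subset)
    moreover have "card UU \<le> card (UNIV::('a^'n) set)" by (rule card_mono) auto
    ultimately show ?thesis using k_def unfolding q_def by simp
  qed
  have len: "real (length cols) =
           ((real q ^ k - real q ^ u 0) - (\<Sum>i=1..h. (real q ^ u i - real q ^ u 0))) / (real q - 1)"
  proof -
    have "int (q - 1) * int (length cols) = int q ^ k - int q ^ u 0 - (\<Sum>i=1..h. int q ^ u i - int q ^ u 0)"
      using cardS cardS2 cardUn by (metis diff_diff_eq of_nat_mult)
    then have "real_of_int (int (q - 1) * int (length cols)) =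
          real_of_int (int q ^ k - int q ^ u 0 - (\<Sum>i=1..h. int q ^ u i - int q ^ u 0))" by simp
    then have "(real q - 1) * real (length cols) = real q ^ k - real q ^ u 0 - (\<Sum>i=1..h. real q ^ u i - real q ^ u 0)"
      using q2 by (simp add: of_nat_diff)
    moreover have "real q - 1 \<noteq> 0" using q2 by simp
    ultimately show ?thesis by (simp add: field_simps)
  qed
  have wt_S: "(q - 1) * wt z = card (S - H z)" for z
  proof -
    have "card {v\<in>S. scalar_product z v \<noteq> 0} = (CARD('a) - 1) * card {c\<in>set cols. scalar_product z c \<noteq> 0}"
      by (rule cnt) (simp add: sp_scale)
    moreover have "{v\<in>S. scalar_product z v \<noteq> 0} = S - H z" unfolding H_def by auto
    ultimately show ?thesis unfolding wt_def q_def by simp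
  qed
  have cardH: "q * card (H z) = q ^ k" if "z \<noteq> 0" for z
    using card_hyper[OF that] k_def unfolding H_def q_def by simp
  have cardH': "card (H z) = q ^ (k - 1)" if "z \<noteq> 0" for z
  proof -
    have "q * card (H z) = q * q ^ (k - 1)" using cardH[OF that] k3
      by (metis Suc_diff_1 le_trans numeral_le_one_iff one_le_numeral not_less_eq_eq power_Suc le_add2 plus_1_eq_Suc add_leD1 semiring_norm(70) zero_less_iff_neq_zero Suc_le_lessD)
    then show ?thesis using q2 by simp
  qed
  have wt_formula: "int (q - 1) * int (wt z) = int q ^ k - int q ^ (k - 1) - int (card (UU - H z))"
    if "z \<noteq> 0" for z
  proof -
    have "S - H z = (UNIV - H z) - (UU - H z)" unfolding S_alt by blast
    then have "card (S - H z) = card (UNIV - H z) - card (UU - H z)"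
      by (simp add: card_Diff_subset Diff_mono)
    moreover have "card (UU - H z) \<le> card (UNIV - H z)" by (rule card_mono) auto
    moreover have "card (UNIV - H z) = q ^ k - q ^ (k - 1)"
      using cardH'[OF that] k_def unfolding q_def by (simp add: card_Diff_subset)
    moreover have "q ^ (k - 1) \<le> q ^ k" using q2 by (simp add: power_increasing)
    ultimately have "int (card (S - H z)) = int q ^ k - int q ^ (k - 1) - int (card (UU - H z))"
      by (simp add: of_nat_diff)
    then show ?thesis using wt_S[of z] by (metis of_nat_mult)
  qed
  have wt_pos: "wt z > 0" if "z \<noteq> 0" for z
  proof -
    have "UU - H z \<subseteq> UU - {0}" unfolding H_def by auto
    then have "card (UU - H z) \<le> card (UU - {0})" by (simp add: card_mono)
    also have "\<dots> = card UU - 1" using zero_Un by simp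
    finally have "int (card (UU - H z)) \<le> int (card UU) - 1" using zero_Un
      by (metis card_0_eq empty_iff finite of_nat_1 of_nat_diff of_nat_le_iff le_add_diff_inverse2 less_one linorder_not_less)
    then have "int (q - 1) * int (wt z) > 0" using wt_formula[OF that] ineq cardUn by linarith
    then show ?thesis by (simp add: zero_less_mult_iff)
  qed
  define cw where "cw = (\<lambda>x::'a^'n. map (\<lambda>c. scalar_product x c) cols)"
  have gc: "gen_code cols = range cw" unfolding gen_code_def cw_def by auto
  have hw: "hweight (cw x) = wt x" for x
    unfolding cw_def wt_def by (rule hweight_map[OF cols_dist])
  have inj: "inj cw"
  proof
    fix x y assume "cw x = cw y"
    then have "\<forall>c\<in>set cols. scalar_product (x - y) c = 0"
      unfolding cw_def by (simp add: sp_diff_left)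
    then have "wt (x - y) = 0" unfolding wt_def by simp
    then show "x = y" using wt_pos[of "x - y"] by auto
  qed
  have card_code: "card (gen_code cols) = q ^ k"
    unfolding gc using card_image[OF inj] k_def unfolding q_def by simp
  define T where "T = int q ^ (k - 1) - (\<Sum>i=1..h. int q ^ (u i - 1))"
  define a where "a = (\<lambda>z i. int (card (Us i - H z)))"
  have wt_formula2: "int (q - 1) * int (wt z) = int q ^ k - int q ^ (k - 1) - a z 0 - (\<Sum>i=1..h. a z i - a z 0)"
    if "z \<noteq> 0" for z
    using wt_formula[OF that] decompX[of "H z"] unfolding a_def by simp
  have qk: "int q ^ k - int q ^ (k - 1) = (int q - 1) * int q ^ (k - 1)"
    using k3 by (intro pow_diff_int) simp
  have a_full: "a z i = (int q - 1) * int q ^ (u i - 1)" if "i \<le> h" "\<not> Us i \<subseteq> H z" for z i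
  proof -
    have c: "card (Us i - H z) = q ^ u i - q ^ (u i - 1)" and d: "u i \<ge> 1"
      using card_diff_hyper[OF sub[OF that(1)], of z] that dim unfolding H_def q_def by auto
    have "q ^ (u i - 1) \<le> q ^ u i" using q2 by (simp add: power_increasing)
    then have "a z i = int q ^ u i - int q ^ (u i - 1)" unfolding a_def using c by (simp add: of_nat_diff)
    then show ?thesis using pow_diff_int[OF d] by simp
  qed
  have a_le: "a z i \<le> (int q - 1) * int q ^ (u i - 1)" if "i \<le> h" for z i
  proof (cases "Us i \<subseteq> H z")
    case True
    then have "a z i = 0" unfolding a_def by simp
    then show ?thesis using q2 by simp
  next
    case False then show ?thesis using a_full that by simp
  qed
  have a_nonneg: "a z i \<ge> 0" for z i unfolding a_def by simp
  have lower: "int (wt z) \<ge> T" if "z \<noteq> 0" for z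
  proof -
    have s1: "(\<Sum>i=1..h. a z i - a z 0) = (\<Sum>i=1..h. a z i) - int h * a z 0"
      by (simp add: sum_subtractf)
    have s2: "(\<Sum>i=1..h. a z i) \<le> (\<Sum>i=1..h. (int q - 1) * int q ^ (u i - 1))"
      using a_le by (intro sum_mono) auto
    have s3: "(\<Sum>i=1..h. (int q - 1) * int q ^ (u i - 1)) = (int q - 1) * (\<Sum>i=1..h. int q ^ (u i - 1))"
      by (simp add: sum_distrib_left)
    have "int h * a z 0 \<ge> a z 0" using h2 a_nonneg[of z 0]
      by (metis mult_le_cancel_right1 not_less of_nat_1 of_nat_le_iff one_le_numeral le_trans)
    then have "int (q - 1) * int (wt z) \<ge> (int q - 1) * T"
      using wt_formula2[OF that] s1 s2 s3 qk a_nonneg[of z 0] unfolding T_def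
      by (simp add: algebra_simps)
    then have "(int q - 1) * int (wt z) \<ge> (int q - 1) * T" using q2 by (simp add: of_nat_diff)
    then show ?thesis using q2 by (simp add: mult_le_cancel_left)
  qed
  \<comment> \<open>existence of an optimal hyperplane\<close>
  define A where "A = (\<lambda>i. {x::'a^'n. \<forall>v\<in>Us i. scalar_product x v = 0})"
  have cardA: "card (A i) = q ^ (k - u i)" if "i \<le> h" for i
  proof -
    have "card (A i) * q ^ u i = q ^ k"
      using card_ann[OF sub[OF that]] cardU[OF that] k_def unfolding A_def q_def by simp
    moreover have "q ^ k = q ^ (k - u i) * q ^ u i" using u_le_k[OF that]
      by (metis le_add_diff_inverse2 power_add)
    ultimately show ?thesis using q2 by simp
  qed
  have A0: "0 \<in> A i" for i unfolding A_def by (simp add: sp_comm)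
  have Asub: "A i \<subseteq> A 0" if "1 \<le> i" "i \<le> h" for i using U0i[OF that] unfolding A_def by blast
  have exz: "\<exists>z. z \<in> A 0 \<and> (\<forall>i\<in>{1..h}. z \<notin> A i)"
  proof (rule ccontr)
    assume "\<not> ?thesis"
    then have "A 0 \<subseteq> {0} \<union> (\<Union>i\<in>{1..h}. A i - {0})" by blast
    then have "card (A 0) \<le> card ({0} \<union> (\<Union>i\<in>{1..h}. A i - {0}))" by (simp add: card_mono)
    also have "\<dots> \<le> 1 + card (\<Union>i\<in>{1..h}. A i - {0})"
    proof -
      have cu: "card ({0} \<union> (\<Union>i\<in>{1..h}. A i - {0})) \<le> card {0::'a^'n} + card (\<Union>i\<in>{1..h}. A i - {0})"
        by (rule card_Un_le)
      have "card {0::'a^'n} = 1" by simp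
      then show ?thesis using cu by linarith
    qed
    also have "\<dots> \<le> 1 + (\<Sum>i=1..h. card (A i - {0}))"
    proof -
      have "card (\<Union>i\<in>{1..h}. A i - {0}) \<le> (\<Sum>i=1..h. card (A i - {0}))"
        by (rule card_UN_le) simp
      then show ?thesis by linarith
    qed
    also have "(\<Sum>i=1..h. card (A i - {0})) = (\<Sum>i=1..h. q ^ (k - u i) - 1)"
      using cardA A0 by (intro sum.cong) auto
    finally have c1: "card (A 0) \<le> 1 + (\<Sum>i=1..h. q ^ (k - u i) - 1)" .
    have pos: "q ^ (k - u i) \<ge> 1" for i using q2 by simp
    have "int (\<Sum>i=1..h. q ^ (k - u i) - 1) = (\<Sum>i=1..h. int q ^ (k - u i) - 1)"
      using pos by (simp add: of_nat_diff)
    also have "\<dots> = (\<Sum>i=1..h. int q ^ (k - u i)) - int h" by (simp add: sum_subtractf)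
    finally have c2: "int (card (A 0)) \<le> 1 + (\<Sum>i=1..h. int q ^ (k - u i)) - int h" using c1 by linarith
    have "(\<Sum>i=1..h. int q ^ (k - u i)) \<le> (\<Sum>i=1..h. int q ^ (k - u 1))"
    proof (rule sum_mono)
      fix i assume "i \<in> {1..h}"
      then have "u 1 \<le> u i" using u_ge by auto
      then have "k - u i \<le> k - u 1" by (rule diff_le_mono2)
      then show "int q ^ (k - u i) \<le> int q ^ (k - u 1)" using q2 by (simp add: power_increasing)
    qed
    also have "\<dots> = int h * int q ^ (k - u 1)" by simp
    also have "\<dots> \<le> int q ^ (u 1 - u 0) * int q ^ (k - u 1)"
      using hle by (intro mult_right_mono) (auto simp flip: of_nat_power)
    also have "\<dots> = int q ^ (k - u 0)"
    proof -
      have "u 1 \<le> k" using u_le_k h2 by simp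
      then have "(u 1 - u 0) + (k - u 1) = k - u 0" using u01 by simp
      then show ?thesis by (metis power_add)
    qed
    finally have "int (card (A 0)) < int q ^ (k - u 0)" using c2 h2 by linarith
    then show False using cardA[of 0] by simp
  qed
  then obtain z0 where z0A: "z0 \<in> A 0" and z0n: "\<forall>i\<in>{1..h}. z0 \<notin> A i" by blast
  have z0nz: "z0 \<noteq> 0" using z0n A0[of 1] h2 by auto
  have a00: "a z0 0 = 0" using z0A unfolding a_def A_def H_def by auto
  have ai0: "a z0 i = (int q - 1) * int q ^ (u i - 1)" if "i \<in> {1..h}" for i
  proof (rule a_full)
    show "i \<le> h" using that by simp
    show "\<not> Us i \<subseteq> H z0" using z0n that unfolding A_def H_def by blast
  qed
  have wt0: "int (wt z0) = T"
  proof -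
    have "(\<Sum>i=1..h. a z0 i - a z0 0) = (\<Sum>i=1..h. (int q - 1) * int q ^ (u i - 1))"
      using ai0 a00 by (intro sum.cong) auto
    also have "\<dots> = (int q - 1) * (\<Sum>i=1..h. int q ^ (u i - 1))" by (simp add: sum_distrib_left)
    finally have "int (q - 1) * int (wt z0) = (int q - 1) * T"
      using wt_formula2[OF z0nz] a00 qk unfolding T_def by (simp add: algebra_simps)
    then have "(int q - 1) * int (wt z0) = (int q - 1) * T" using q2 by (simp add: of_nat_diff)
    then show ?thesis using q2 by simp
  qed
  define M where "M = {hweight c | c. c \<in> gen_code cols \<and> (\<exists>a\<in>set c. a \<noteq> 0)}"
  have M_eq: "M = {wt z | z. z \<noteq> 0}"
  proof
    show "M \<subseteq> {wt z | z. z \<noteq> 0}"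
    proof
      fix n assume "n \<in> M"
      then obtain x where n: "n = hweight (cw x)" and nz: "\<exists>a\<in>set (cw x). a \<noteq> 0"
        unfolding M_def gc by blast
      have "x \<noteq> 0" using nz unfolding cw_def by (auto simp: scalar_product_def)
      then show "n \<in> {wt z | z. z \<noteq> 0}" using n hw by auto
    qed
    show "{wt z | z. z \<noteq> 0} \<subseteq> M"
    proof
      fix n assume "n \<in> {wt z | z. z \<noteq> 0}"
      then obtain z where n: "n = wt z" and z: "z \<noteq> 0" by blast
      have "wt z > 0" using wt_pos[OF z] .
      then have "\<exists>a\<in>set (cw z). a \<noteq> 0"
      proof -
        have "{c\<in>set cols. scalar_product z c \<noteq> 0} \<noteq> {}"
          using \<open>wt z > 0\<close> unfolding wt_def by (metis card.empty less_irrefl)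
        then obtain c where c: "c \<in> set cols" "scalar_product z c \<noteq> 0" by blast
        have "scalar_product z c \<in> set (cw z)" unfolding cw_def using c(1) by simp
        then show ?thesis using c(2) by blast
      qed
      then have "wt z = hweight (cw z) \<and> cw z \<in> range cw \<and> (\<exists>a\<in>set (cw z). a \<noteq> 0)"
        using hw by simp
      then show "n \<in> M" unfolding M_def gc n by blast
    qed
  qed
  have finM: "finite M" unfolding M_eq
    by (rule finite_subset[of _ "range wt"]) auto
  have "Min M = wt z0"
  proof (rule Min_eqI[OF finM])
    show "wt z0 \<in> M" unfolding M_eq using z0nz by blast
    fix y assume "y \<in> M"
    then obtain z where "y = wt z" "z \<noteq> 0" unfolding M_eq by blast
    then show "wt z0 \<le> y" using lower wt0 by fastforce
  qed
  then have md: "int (min_dist (gen_code cols)) = T" unfolding min_dist_def M_def[symmetric] using wt0 by simp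
  show ?thesis using len card_code md unfolding T_def by simp
qed

end
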